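(* Let $a_k\ge0$, $b_k>0$ $(k\ge0)$ be such that $\mathcal{A}(t)=\sum_{k=0}^\infty a_k(k+1)^{-t}$ and $\mathcal{B}(t)=\sum_{k=0}^\infty b_k(k+1)^{-t}$ converge on $(0,\infty)$. If $\{a_k/b_k\}$ is increasing (resp. decreasing) for all $k\ge0$, then $t\mapsto\mathcal{A}(t)/\mathcal{B}(t)$ is decreasing (resp. increasing) on $(0,\infty)$ and $t\mapsto\mathcal{A}(1-t)/\mathcal{B}(1-t)$ is increasing (resp. decreasing) on $(-\infty,1)$. *)

theory Defs
  imports "HOL-Analysis.Analysis"
begin

definition dser :: "(nat \<Rightarrow> real) \<Rightarrow> real \<Rightarrow> real" where
  "dser c t = (\<Sum>k. c k * (real k + 1) powr (- t))"

end

theory Submission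
  imports Defs
begin

lemma dser_pos:
  assumes "\<And>k. b k > 0" "summable (\<lambda>k. b k * (real k + 1) powr (- t))"
  shows "dser b t > 0"
  unfolding dser_def
  by (rule suminf_pos) (use assms in auto)

lemma core:
  fixes a b :: "nat \<Rightarrow> real"
  assumes b_pos: "\<And>k. b k > 0"
    and sa: "summable (\<lambda>k. a k * (real k + 1) powr (- s))"
    and sa': "summable (\<lambda>k. a k * (real k + 1) powr (- t))"
    and sb: "summable (\<lambda>k. b k * (real k + 1) powr (- s))"
    and sb': "summable (\<lambda>k. b k * (real k + 1) powr (- t))"
    and mo: "mono (\<lambda>k. a k / b k)" and st: "s \<le> t"
  shows "dser a t / dser b t \<le> dser a s / dser b s"
proof -
  define x where "x k = real k + 1" for k
  have xpos: "x k > 0" for k unfolding x_def by simp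
  have xmono: "i \<le> j \<Longrightarrow> x i \<le> x j" for i j unfolding x_def by simp
  define L where "L = dser a s / dser b s"
  have Bs: "dser b s > 0" by (rule dser_pos[OF b_pos sb])
  have Bt: "dser b t > 0" by (rule dser_pos[OF b_pos sb'])
  have LB: "L * dser b s = dser a s" unfolding L_def using Bs by simp
  have anti: "i \<le> j \<Longrightarrow> x j powr (s - t) \<le> x i powr (s - t)" for i j
    by (rule powr_mono2') (use st xpos xmono in auto)
  obtain mu where mu: "\<And>k. (a k / b k - L) * (x k powr (s - t) - mu) \<le> 0"
  proof (cases "\<exists>k. a k / b k > L")
    case True
    define m where "m = (LEAST k. a k / b k > L)"
    have m: "a m / b m > L" unfolding m_def by (rule LeastI_ex[OF True])
    show ?thesis
    proof (rule that[of "x m powr (s - t)"])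
      fix k
      show "(a k / b k - L) * (x k powr (s - t) - x m powr (s - t)) \<le> 0"
      proof (cases "a k / b k > L")
        case True
        then have "m \<le> k" unfolding m_def by (rule Least_le)
        then have "x k powr (s - t) \<le> x m powr (s - t)" by (rule anti)
        then show ?thesis using True by (simp add: mult_nonneg_nonpos)
      next
        case False
        have "k \<le> m"
        proof (rule ccontr)
          assume "\<not> k \<le> m"
          then have "a m / b m \<le> a k / b k" using mo by (simp add: mono_def)
          then show False using m False by simp
        qed
        then have "x m powr (s - t) \<le> x k powr (s - t)" by (rule anti)
        then show ?thesis using False by (simp add: mult_nonpos_nonneg)
      qed
    qed
  next
    case False
    show ?thesis
    proof (rule that[of 0])
      fix k
      have "a k / b k - L \<le> 0" using False by (simp add: not_less)
      moreover have "x k powr (s - t) - 0 \<ge> 0" by simp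
      ultimately show "(a k / b k - L) * (x k powr (s - t) - 0) \<le> 0"
        by (simp add: mult_nonpos_nonneg)
    qed
  qed
  define f where "f k = (a k * x k powr (- t) - L * (b k * x k powr (- t)))
      - mu * (a k * x k powr (- s) - L * (b k * x k powr (- s)))" for k
  have fle: "f k \<le> 0" for k
  proof -
    have "f k = (b k * x k powr (- s)) * ((a k / b k - L) * (x k powr (s - t) - mu))"
    proof -
      have e: "x k powr (- s) * x k powr (s - t) = x k powr (- t)"
        by (simp add: powr_add[symmetric])
      have bk: "b k \<noteq> 0" using b_pos[of k] by simp
      show ?thesis unfolding f_def using e bk
        by (simp add: field_simps)
    qed
    also have "\<dots> \<le> 0"
      by (rule mult_nonneg_nonpos) (use b_pos[of k] xpos[of k] mu[of k] in auto)
    finally show ?thesis .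
  qed
  have sa2: "summable (\<lambda>k. a k * x k powr (- s))" using sa unfolding x_def .
  have sa2': "summable (\<lambda>k. a k * x k powr (- t))" using sa' unfolding x_def .
  have sb2: "summable (\<lambda>k. b k * x k powr (- s))" using sb unfolding x_def .
  have sb2': "summable (\<lambda>k. b k * x k powr (- t))" using sb' unfolding x_def .
  have da: "dser a r = (\<Sum>k. a k * x k powr (- r))" for r unfolding dser_def x_def ..
  have db: "dser b r = (\<Sum>k. b k * x k powr (- r))" for r unfolding dser_def x_def ..
  have S1: "(\<lambda>k. a k * x k powr (- t) - L * (b k * x k powr (- t))) sums (dser a t - L * dser b t)"
    unfolding da db
    by (intro sums_diff sums_mult summable_sums sa2' sb2')
  have S2: "(\<lambda>k. a k * x k powr (- s) - L * (b k * x k powr (- s))) sums (dser a s - L * dser b s)"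
    unfolding da db
    by (intro sums_diff sums_mult summable_sums sa2 sb2)
  have "f sums ((dser a t - L * dser b t) - mu * (dser a s - L * dser b s))"
    unfolding f_def by (intro sums_diff sums_mult S1 S2)
  then have "f sums (dser a t - L * dser b t)" using LB by simp
  then have "dser a t - L * dser b t \<le> 0"
    using fle by (metis sums_le sums_zero)
  then have "dser a t \<le> L * dser b t" by simp
  then show ?thesis unfolding L_def[symmetric] using Bt by (simp add: divide_le_eq)
qed

theorem corollary9:
  fixes a b :: "nat \<Rightarrow> real"
  assumes a_nonneg: "\<And>k. a k \<ge> 0"
    and b_pos: "\<And>k. b k > 0"
    and a_conv: "\<And>t. t > 0 \<Longrightarrow> summable (\<lambda>k. a k * (real k + 1) powr (- t))"
    and b_conv: "\<And>t. t > 0 \<Longrightarrow> summable (\<lambda>k. b k * (real k + 1) powr (- t))"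
  shows "(mono (\<lambda>k. a k / b k) \<longrightarrow>
            antimono_on {0<..} (\<lambda>t. dser a t / dser b t) \<and>
            mono_on {..<1} (\<lambda>t. dser a (1 - t) / dser b (1 - t)))
       \<and> (antimono (\<lambda>k. a k / b k) \<longrightarrow>
            mono_on {0<..} (\<lambda>t. dser a t / dser b t) \<and>
            antimono_on {..<1} (\<lambda>t. dser a (1 - t) / dser b (1 - t)))"
proof -
  have A: "dser a t / dser b t \<le> dser a s / dser b s"
    if "mono (\<lambda>k. a k / b k)" "0 < s" "s \<le> t" for s t
    by (rule core[OF b_pos a_conv a_conv b_conv b_conv that(1) that(3)]) (use that in auto)
  define a' where "a' k = - a k" for k
  have dneg: "dser a' r = - dser a r" if "r > 0" for r
    unfolding dser_def a'_def using suminf_minus[OF a_conv[OF that]] by simp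
  have B: "dser a s / dser b s \<le> dser a t / dser b t"
    if "antimono (\<lambda>k. a k / b k)" "0 < s" "s \<le> t" for s t
  proof -
    have m: "mono (\<lambda>k. a' k / b k)" using that(1)
      unfolding a'_def monotone_def by auto
    have c: "summable (\<lambda>k. a' k * (real k + 1) powr (- r))" if "r > 0" for r
      unfolding a'_def using summable_minus[OF a_conv[OF that]] by simp
    have "dser a' t / dser b t \<le> dser a' s / dser b s"
      by (rule core[OF b_pos c c b_conv b_conv m that(3)]) (use that in auto)
    then show ?thesis using dneg[of s] dneg[of t] that by simp
  qed
  show ?thesis
  proof (intro conjI impI)
    assume h: "mono (\<lambda>k. a k / b k)"
    show "antimono_on {0<..} (\<lambda>t. dser a t / dser b t)"
      by (rule monotone_onI) (use A[OF h] in auto)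
    show "mono_on {..<1} (\<lambda>t. dser a (1 - t) / dser b (1 - t))"
      by (rule monotone_onI) (use A[OF h] in auto)
  next
    assume h: "antimono (\<lambda>k. a k / b k)"
    show "mono_on {0<..} (\<lambda>t. dser a t / dser b t)"
      by (rule monotone_onI) (use B[OF h] in auto)
    show "antimono_on {..<1} (\<lambda>t. dser a (1 - t) / dser b (1 - t))"
      by (rule monotone_onI) (use B[OF h] in auto)
  qed
qed

end
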